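(* For any integer $d\geqslant 2$ and any $1/2<\alpha<1$, the Hausdorff dimension of ${\mathcal E}_{d,\alpha}$ satisfies $\dim{\mathcal E}_{d,\alpha}<d$.
   Context: Let $\mathsf{T}_d=(\mathbb{R}/\mathbb{Z})^d$, identified with $[0,1)^d$, and write $\mathbf{e}(x)=\exp(2\pi i x)$. For $\mathbf x=(x_1,\ldots,x_d)\in\mathsf{T}_d$ and $N\in\mathbb{N}$ define $S_d(\mathbf x;N)=\sum_{n=1}^{N}\mathbf{e}(x_1n+\ldots+x_dn^d)$. For $0<\alpha<1$ define ${\mathcal E}_{d,\alpha}=\{\mathbf x\in\mathsf{T}_d:\ |S_d(\mathbf x;N)|\geqslant N^{\alpha}\text{ for infinitely many }N\in\mathbb{N}\}$. *)

theory Defs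
  imports "HOL-Analysis.Analysis"
begin

text \<open>Points of the torus T_d, identified with [0,1)^d, are represented as functions
  nat => real whose coordinates 1..d lie in [0,1) and which vanish elsewhere.\<close>

definition torus :: "nat \<Rightarrow> (nat \<Rightarrow> real) set" where
  "torus d = {x. (\<forall>i\<in>{1..d}. 0 \<le> x i \<and> x i < 1) \<and> (\<forall>i. i \<notin> {1..d} \<longrightarrow> x i = 0)}"

definition e :: "real \<Rightarrow> complex" where
  "e t = exp (2 * of_real pi * \<i> * of_real t)"

definition weyl_sum :: "nat \<Rightarrow> (nat \<Rightarrow> real) \<Rightarrow> nat \<Rightarrow> complex" where
  "weyl_sum d x N = (\<Sum>n=1..N. e (\<Sum>k=1..d. x k * real n ^ k))"

definition E_set :: "nat \<Rightarrow> real \<Rightarrow> (nat \<Rightarrow> real) set" where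
  "E_set d \<alpha> = {x \<in> torus d. infinite {N::nat. N \<ge> 1 \<and> norm (weyl_sum d x N) \<ge> real N powr \<alpha>}}"

definition euc_dist :: "nat \<Rightarrow> (nat \<Rightarrow> real) \<Rightarrow> (nat \<Rightarrow> real) \<Rightarrow> real" where
  "euc_dist d x y = sqrt (\<Sum>i=1..d. (x i - y i)^2)"

definition bounded_wrt :: "('a \<Rightarrow> 'a \<Rightarrow> real) \<Rightarrow> 'a set \<Rightarrow> bool" where
  "bounded_wrt dd A = (\<exists>B. \<forall>x\<in>A. \<forall>y\<in>A. dd x y \<le> B)"

definition diam_wrt :: "('a \<Rightarrow> 'a \<Rightarrow> real) \<Rightarrow> 'a set \<Rightarrow> real" where
  "diam_wrt dd A = (if A = {} then 0 else Sup {dd x y | x y. x \<in> A \<and> y \<in> A})"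

definition haus_term :: "('a \<Rightarrow> 'a \<Rightarrow> real) \<Rightarrow> real \<Rightarrow> 'a set \<Rightarrow> ennreal" where
  "haus_term dd s C = (if C = {} then 0 else if s = 0 then 1 else ennreal (diam_wrt dd C powr s))"

definition hausdorff_pre :: "('a \<Rightarrow> 'a \<Rightarrow> real) \<Rightarrow> real \<Rightarrow> real \<Rightarrow> 'a set \<Rightarrow> ennreal" where
  "hausdorff_pre dd s \<delta> A =
     (INF C \<in> {C :: nat \<Rightarrow> 'a set. A \<subseteq> (\<Union>i. C i) \<and>
                 (\<forall>i. bounded_wrt dd (C i) \<and> diam_wrt dd (C i) \<le> \<delta>)}.
        (\<Sum>i. haus_term dd s (C i)))"

definition hausdorff_measure :: "('a \<Rightarrow> 'a \<Rightarrow> real) \<Rightarrow> real \<Rightarrow> 'a set \<Rightarrow> ennreal" where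
  "hausdorff_measure dd s A = (SUP \<delta> \<in> {0<..}. hausdorff_pre dd s \<delta> A)"

definition hausdorff_dim :: "('a \<Rightarrow> 'a \<Rightarrow> real) \<Rightarrow> 'a set \<Rightarrow> ereal" where
  "hausdorff_dim dd A = Inf {ereal s | s. s \<ge> 0 \<and> hausdorff_measure dd s A = 0}"

end

theory Submission
  imports Defs "HOL-Real_Asymp.Real_Asymp"
begin


lemma e_add: "e (a + b) = e a * e b"
  unfolding e_def by (simp add: distrib_left distrib_right exp_add)

lemma e_diff: "e (a - b) = e a * cnj (e b)"
  unfolding e_def by (simp add: exp_diff exp_cnj divide_inverse exp_minus  algebra_simps)

lemma norm_e [simp]: "norm (e a) = 1"
  unfolding e_def by simp

lemma e_int: "e (real_of_int k) = 1"
  unfolding e_def exp_eq_1 by (auto intro!: exI[of _ k])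

lemma e_eq_1D: "e t = 1 \<Longrightarrow> t \<in> \<int>"
  unfolding e_def exp_eq_1 by (auto simp: Ints_def)

lemma cis_lip: "norm (cis x - 1) \<le> \<bar>x\<bar>"
proof -
  have "(norm (cis x - 1))^2 = (cos x - 1)^2 + (sin x)^2"
    by (simp add: cmod_def)
  also have "\<dots> = 2 - 2 * cos x" by (simp add: power2_eq_square algebra_simps sin_squared_eq)
  also have "cos x = 1 - 2 * sin (x/2) ^ 2" using cos_double_sin[of "x/2"] by simp
  also have "2 - 2 * (1 - 2 * sin (x/2) ^ 2) = (2 * sin (x/2))^2" by (simp add: power2_eq_square)
  also have "\<dots> \<le> x^2"
  proof -
    have "\<bar>2 * sin (x/2)\<bar> \<le> \<bar>x\<bar>" using abs_sin_x_le_abs_x[of "x/2"] by simp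
    then show ?thesis by (metis abs_le_square_iff power2_abs)
  qed
  finally show ?thesis by (metis abs_le_square_iff abs_norm_cancel)
qed

lemma e_lip0: "norm (e t - 1) \<le> 2 * pi * \<bar>t\<bar>"
proof -
  have "e t = cis (2 * pi * t)" unfolding e_def cis_conv_exp by (simp add: mult_ac)
  then show ?thesis using cis_lip[of "2*pi*t"] by (simp add: abs_mult)
qed

lemma e_lip: "norm (e a - e b) \<le> 2 * pi * \<bar>a - b\<bar>"
proof -
  have "e a - e b = e b * (e (a - b) - 1)" using e_add[of b "a-b"] by (simp add: algebra_simps)
  then have "norm (e a - e b) = norm (e (a - b) - 1)" by (simp add: norm_mult)
  then show ?thesis using e_lip0 by simp
qed

definition Pol :: "nat \<Rightarrow> (nat \<Rightarrow> real) \<Rightarrow> nat \<Rightarrow> real" where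
  "Pol d y n = (\<Sum>k=1..d. y k * real n ^ k)"
definition grid :: "nat \<Rightarrow> nat \<Rightarrow> (nat \<Rightarrow> nat) set" where
  "grid d Q = PiE {1..d} (\<lambda>_. {..<Q})"
definition gpt :: "nat \<Rightarrow> (nat \<Rightarrow> nat) \<Rightarrow> nat \<Rightarrow> real" where
  "gpt Q g = (\<lambda>k. real (g k) / real Q)"

lemma sum_upd1:
  fixes f :: "'b \<Rightarrow> real" and c :: "'a \<Rightarrow> real"
  assumes "finite K" "j \<in> K"
  shows "(\<Sum>k\<in>K. f ((g(j := v)) k) * c k) = (\<Sum>k\<in>K. f (g k) * c k) + (f v - f (g j)) * c j"
proof -
  have "(\<Sum>k\<in>K. f ((g(j := v)) k) * c k) - (\<Sum>k\<in>K. f (g k) * c k)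
      = (\<Sum>k\<in>K. (f ((g(j := v)) k) - f (g k)) * c k)"
    by (simp add: sum_subtractf left_diff_distrib)
  also have "\<dots> = (\<Sum>k\<in>K. (if k = j then (f v - f (g j)) * c j else 0))"
    by (rule sum.cong) auto
  also have "\<dots> = (f v - f (g j)) * c j" using assms by simp
  finally show ?thesis by (simp add: algebra_simps)
qed

lemma orth:
  assumes d: "d \<ge> 1" and nQ: "n < Q" and mQ: "m < Q" and nm: "n \<noteq> m"
  shows "(\<Sum>g\<in>grid d Q. e (Pol d (gpt Q g) n - Pol d (gpt Q g) m)) = 0"
proof -
  define c where "c k = (real n ^ k - real m ^ k) / real Q" for k
  define D where "D g = (\<Sum>k\<in>{1..d}. real (g k) * c k)" for g :: "nat \<Rightarrow> nat"
  have DD: "Pol d (gpt Q g) n - Pol d (gpt Q g) m = D g" for g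
    unfolding Pol_def gpt_def D_def c_def by (simp add: sum_subtractf[symmetric] diff_divide_distrib algebra_simps)
  define \<sigma> where "\<sigma> g = g(1 := (g 1 + 1) mod Q)" for g :: "nat \<Rightarrow> nat"
  define \<tau> where "\<tau> g = g(1 := (g 1 + Q - 1) mod Q)" for g :: "nat \<Rightarrow> nat"
  have Q0: "Q > 0" using nQ by simp
  have 1: "1 \<in> {1..d}" using d by simp
  have bij: "bij_betw \<sigma> (grid d Q) (grid d Q)"
  proof (rule bij_betw_byWitness[where f' = \<tau>])
    show "\<forall>g\<in>grid d Q. \<tau> (\<sigma> g) = g"
    proof
      fix g assume g: "g \<in> grid d Q"
      then have "g 1 < Q" using 1 unfolding grid_def by (auto simp: PiE_def Pi_def)
      then have "((g 1 + 1) mod Q + Q - 1) mod Q = g 1"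
        by (cases "g 1 + 1 < Q") (auto simp: mod_if)
      then show "\<tau> (\<sigma> g) = g" unfolding \<sigma>_def \<tau>_def by auto
    qed
    show "\<forall>g\<in>grid d Q. \<sigma> (\<tau> g) = g"
    proof
      fix g assume g: "g \<in> grid d Q"
      then have "g 1 < Q" using 1 unfolding grid_def by (auto simp: PiE_def Pi_def)
      then have "((g 1 + Q - 1) mod Q + 1) mod Q = g 1"
        by (cases "g 1 = 0") (auto simp: mod_if)
      then show "\<sigma> (\<tau> g) = g" unfolding \<sigma>_def \<tau>_def by auto
    qed
    show "\<sigma> ` grid d Q \<subseteq> grid d Q"
      using 1 Q0 unfolding \<sigma>_def grid_def by (auto simp: PiE_def Pi_def extensional_def)
    show "\<tau> ` grid d Q \<subseteq> grid d Q"
      using 1 Q0 unfolding \<tau>_def grid_def by (auto simp: PiE_def Pi_def extensional_def)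
  qed
  define \<omega> where "\<omega> = e ((real n - real m) / real Q)"
  have shift: "e (D (\<sigma> g)) = \<omega> * e (D g)" if g: "g \<in> grid d Q" for g
  proof -
    have g1: "g 1 < Q" using g 1 unfolding grid_def by (auto simp: PiE_def Pi_def)
    have "D (\<sigma> g) = D g + (real ((g 1 + 1) mod Q) - real (g 1)) * c 1"
      unfolding D_def \<sigma>_def using sum_upd1[OF _ 1, of real g "(g 1 + 1) mod Q" c] by simp
    also have "(real ((g 1 + 1) mod Q) - real (g 1)) * c 1 = (real n - real m) / real Q + real_of_int (if g 1 + 1 < Q then 0 else - (int n - int m))"
    proof (cases "g 1 + 1 < Q")
      case True then show ?thesis by (simp add: c_def)
    next
      case False
      then have "g 1 + 1 = Q" using g1 by simp
      then have "(g 1 + 1) mod Q = 0" "real Q = real (g 1) + 1" by auto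
      then show ?thesis using False Q0 by (simp add: c_def field_simps)
    qed
    finally show ?thesis unfolding \<omega>_def by (simp add: e_add e_int mult_ac)
  qed
  define S where "S = (\<Sum>g\<in>grid d Q. e (D g))"
  have "S = (\<Sum>g\<in>grid d Q. e (D (\<sigma> g)))"
    unfolding S_def using sum.reindex_bij_betw[OF bij, of "\<lambda>g. e (D g)"] by simp
  also have "\<dots> = \<omega> * S" unfolding S_def sum_distrib_left by (rule sum.cong) (auto simp: shift)
  finally have "(1 - \<omega>) * S = 0" by (simp add: algebra_simps)
  moreover have "\<omega> \<noteq> 1"
  proof
    assume "\<omega> = 1"
    then obtain z where z: "(real n - real m) / real Q = real_of_int z"
      unfolding \<omega>_def using e_eq_1D by (metis Ints_cases)
    then have zz: "real n - real m = real_of_int z * real Q" using Q0 by (simp add: field_simps)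
    have "\<bar>real n - real m\<bar> < real Q" using nQ mQ by linarith
    then have "\<bar>real_of_int z\<bar> * real Q < 1 * real Q" using zz by (simp add: abs_mult)
    then have "real_of_int \<bar>z\<bar> < 1" using Q0 by (simp only: mult_less_cancel_right_pos of_nat_0_less_iff of_int_abs)
    then have "\<bar>z\<bar> < 1" by (simp only: of_int_less_1_iff)
    then have "z = 0" by simp
    then show False using zz nm by simp
  qed
  ultimately have "S = 0" by simp
  then show ?thesis unfolding S_def DD .
qed


lemma card_grid: "card (grid d Q) = Q ^ d"
  unfolding grid_def by (simp add: card_PiE)

lemma finite_grid: "finite (grid d Q)"
  unfolding grid_def by (simp add: finite_PiE)

lemma parseval:
  assumes d: "d \<ge> 1" and A: "finite A" "A \<subseteq> {..<Q}"
  shows "(\<Sum>g\<in>grid d Q. (norm (\<Sum>n\<in>A. e (Pol d (gpt Q g) n)))^2) = real Q ^ d * real (card A)"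
proof -
  have inner: "(\<Sum>g\<in>grid d Q. e (Pol d (gpt Q g) n - Pol d (gpt Q g) m)) = (if n = m then of_nat (Q ^ d) else 0)"
    if "n \<in> A" "m \<in> A" for n m
  proof (cases "n = m")
    case True then show ?thesis by (simp add: e_int[of 0, simplified] card_grid)
  next
    case False then show ?thesis using orth[OF d, of n Q m] that A by auto
  qed
  have "complex_of_real (\<Sum>g\<in>grid d Q. (norm (\<Sum>n\<in>A. e (Pol d (gpt Q g) n)))^2)
      = (\<Sum>g\<in>grid d Q. (\<Sum>n\<in>A. e (Pol d (gpt Q g) n)) * cnj (\<Sum>m\<in>A. e (Pol d (gpt Q g) m)))"
    by (simp only: of_real_sum complex_norm_square)
  also have "\<dots> = (\<Sum>g\<in>grid d Q. \<Sum>n\<in>A. \<Sum>m\<in>A. e (Pol d (gpt Q g) n - Pol d (gpt Q g) m))"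
    apply (simp add: e_diff sum_distrib_left sum_distrib_right cnj_sum)
    apply (rule sum.cong[OF refl])
    apply (subst sum.swap)
    apply (rule refl)
    done
  also have "\<dots> = (\<Sum>n\<in>A. \<Sum>g\<in>grid d Q. \<Sum>m\<in>A. e (Pol d (gpt Q g) n - Pol d (gpt Q g) m))"
    by (rule sum.swap)
  also have "\<dots> = (\<Sum>n\<in>A. \<Sum>m\<in>A. \<Sum>g\<in>grid d Q. e (Pol d (gpt Q g) n - Pol d (gpt Q g) m))"
    by (rule sum.cong[OF refl], rule sum.swap)
  also have "\<dots> = (\<Sum>n\<in>A. \<Sum>m\<in>A. (if n = m then of_nat (Q ^ d) else 0))"
    by (intro sum.cong refl) (simp add: inner)
  also have "\<dots> = of_nat (card A) * of_nat (Q ^ d)" using A by simp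
  finally have "complex_of_real (\<Sum>g\<in>grid d Q. (norm (\<Sum>n\<in>A. e (Pol d (gpt Q g) n)))^2)
     = complex_of_real (real Q ^ d * real (card A))" by simp
  then show ?thesis by (simp only: of_real_eq_iff)
qed


lemma cheb:
  fixes f :: "'a \<Rightarrow> real"
  assumes G: "finite G" and mu: "\<mu> > 0"
  shows "real (card {g\<in>G. \<mu> \<le> f g}) \<le> (\<Sum>g\<in>G. (f g)^2) / \<mu>^2"
proof -
  let ?B = "{g\<in>G. \<mu> \<le> f g}"
  have "real (card ?B) * \<mu>^2 = (\<Sum>g\<in>?B. \<mu>^2)" by simp
  also have "\<dots> \<le> (\<Sum>g\<in>?B. (f g)^2)"
    by (rule sum_mono) (use mu in \<open>auto intro!: power_mono\<close>)
  also have "\<dots> \<le> (\<Sum>g\<in>G. (f g)^2)"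
    by (rule sum_mono2) (use G in auto)
  finally show ?thesis using mu by (simp add: field_simps)
qed

definition Blk :: "nat \<Rightarrow> (nat \<Rightarrow> real) \<Rightarrow> nat \<Rightarrow> nat \<Rightarrow> complex" where
  "Blk d x l a = (\<Sum>n\<in>{a * 2^l<..(a+1) * 2^l}. e (Pol d x n))"

lemma weyl_Pol: "weyl_sum d x N = (\<Sum>n=1..N. e (Pol d x n))"
  unfolding weyl_sum_def Pol_def by simp

lemma sum_ivl_diff:
  fixes f :: "nat \<Rightarrow> 'a::ab_group_add"
  assumes "a \<le> b"
  shows "(\<Sum>n=1..b. f n) - (\<Sum>n=1..a. f n) = (\<Sum>n\<in>{a<..b}. f n)"
  using assms
proof (induction b)
  case 0 then show ?case by simp
next
  case (Suc b)
  show ?case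
  proof (cases "a = Suc b")
    case True then show ?thesis by simp
  next
    case False
    then have ab: "a \<le> b" using Suc by simp
    have "{a<..Suc b} = insert (Suc b) {a<..b}" using ab by auto
    then show ?thesis using Suc.IH[OF ab] by (simp add: algebra_simps)
  qed
qed

lemma dyadic:
  assumes N: "N \<le> 2^J"
  shows "\<exists>l\<le>J. \<exists>a. (a+1) * 2^l \<le> (2::nat)^J \<and> norm (weyl_sum d x N) \<le> real (J+1) * norm (Blk d x l a)"
proof -
  define P where "P l = 2^l * (N div 2^l)" for l :: nat
  define W where "W m = weyl_sum d x m" for m
  define t where "t l = norm (W (P l) - W (P (Suc l)))" for l
  have P0: "P 0 = N" unfolding P_def by simp
  have "(0::nat) < 2^J" by simp
  then have "N < 2^Suc J" using N unfolding power_Suc by linarith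
  then have PJ: "P (Suc J) = 0" unfolding P_def by simp
  have tele: "W N = (\<Sum>l<Suc J. W (P l) - W (P (Suc l)))"
    using sum_lessThan_telescope'[of "\<lambda>l. W (P l)" "Suc J"] P0 PJ by (simp add: W_def weyl_sum_def)
  define M where "M = Max (t ` {..J})"
  have Min: "M \<in> t ` {..J}" unfolding M_def by (rule Max_in) auto
  then obtain l where l: "l \<le> J" "t l = M" by auto
  have tM: "t l' \<le> M" if "l' \<le> J" for l' unfolding M_def using that by (intro Max_ge) auto
  have WN: "norm (W N) \<le> real (J+1) * M"
  proof -
    have "norm (W N) \<le> (\<Sum>l<Suc J. t l)" unfolding tele t_def by (rule norm_sum)
    also have "\<dots> \<le> (\<Sum>l<Suc J. M)" by (rule sum_mono) (use tM in auto)
    finally show ?thesis by simp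
  qed
  define a where "a = 2 * (N div 2^(Suc l))"
  have h: "N div 2^Suc l = N div 2^l div 2" by (simp only: power_Suc2 div_mult2_eq)
  have divs: "N div 2^l = 2 * (N div 2^(Suc l)) + (N div 2^l) mod 2"
    unfolding h using div_mult_mod_eq[of "N div 2^l" 2] by linarith
  show ?thesis
  proof (cases "(N div 2^l) mod 2 = 0")
    case True
    then have "P l = P (Suc l)" unfolding P_def using divs by simp
    then have "M = 0" using l unfolding t_def by simp
    then have "norm (weyl_sum d x N) \<le> real (J+1) * norm (Blk d x 0 0)" using WN W_def by simp
    moreover have "(0+1) * 2^0 \<le> (2::nat)^J" by simp
    ultimately show ?thesis by blast
  next
    case False
    then have odd: "(N div 2^l) mod 2 = 1" by simp
    have Pl: "P l = (a+1) * 2^l" unfolding P_def a_def using divs odd by simp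
    have Pl1: "P (Suc l) = a * 2^l" unfolding P_def a_def by simp
    have PN: "P l \<le> N" unfolding P_def by simp
    have "W (P l) - W (P (Suc l)) = Blk d x l a"
      unfolding W_def weyl_Pol Blk_def Pl Pl1 by (rule sum_ivl_diff) simp
    then have "t l = norm (Blk d x l a)" unfolding t_def by simp
    then have "norm (weyl_sum d x N) \<le> real (J+1) * norm (Blk d x l a)" using WN l W_def by simp
    moreover have "(a+1) * 2^l \<le> (2::nat)^J" using Pl PN N by simp
    ultimately show ?thesis using l by blast
  qed
qed


lemma pol_lip:
  assumes xy: "\<forall>k\<in>{1..d}. \<bar>x k - y k\<bar> \<le> \<eta>" and n: "1 \<le> n" "real n \<le> R"
  shows "\<bar>Pol d x n - Pol d y n\<bar> \<le> real d * \<eta> * R ^ d"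
proof -
  have "\<bar>Pol d x n - Pol d y n\<bar> = \<bar>\<Sum>k=1..d. (x k - y k) * real n ^ k\<bar>"
    unfolding Pol_def by (simp add: sum_subtractf[symmetric] left_diff_distrib)
  also have "\<dots> \<le> (\<Sum>k=1..d. \<bar>(x k - y k) * real n ^ k\<bar>)" by (rule sum_abs)
  also have "\<dots> \<le> (\<Sum>k=1..d. \<eta> * R ^ d)"
  proof (rule sum_mono)
    fix k assume k: "k \<in> {1..d}"
    have "real n ^ k \<le> real n ^ d" using k n by (intro power_increasing) auto
    also have "\<dots> \<le> R ^ d" using n by (intro power_mono) auto
    finally have "real n ^ k \<le> R ^ d" .
    then show "\<bar>(x k - y k) * real n ^ k\<bar> \<le> \<eta> * R ^ d"
      using xy k by (simp add: abs_mult) (intro mult_mono, auto)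
  qed
  also have "\<dots> = real d * \<eta> * R ^ d" by simp
  finally show ?thesis .
qed

lemma blk_lip:
  assumes xy: "\<forall>k\<in>{1..d}. \<bar>x k - y k\<bar> \<le> \<eta>" and al: "(a+1) * 2^l \<le> (2::nat)^J"
    and eta: "0 \<le> \<eta>"
  shows "norm (Blk d x l a - Blk d y l a) \<le> 2^J * (2 * pi * (real d * \<eta> * 2 ^ (J * d)))"
proof -
  let ?A = "{a * 2^l<..(a+1) * 2^l}"
  have "norm (Blk d x l a - Blk d y l a) = norm (\<Sum>n\<in>?A. e (Pol d x n) - e (Pol d y n))"
    unfolding Blk_def by (simp add: sum_subtractf)
  also have "\<dots> \<le> (\<Sum>n\<in>?A. norm (e (Pol d x n) - e (Pol d y n)))" by (rule norm_sum)
  also have "\<dots> \<le> (\<Sum>n\<in>?A. 2 * pi * (real d * \<eta> * 2 ^ (J * d)))"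
  proof (rule sum_mono)
    fix n assume n: "n \<in> ?A"
    then have "n \<le> 2^J" using al by auto
    then have "real n \<le> real (2^J)" by (simp only: of_nat_le_iff)
    then have "real n \<le> 2^J" by simp
    moreover have "1 \<le> n" using n by auto
    ultimately have "\<bar>Pol d x n - Pol d y n\<bar> \<le> real d * \<eta> * (2^J) ^ d" using pol_lip[OF xy] by blast
    then have pd: "\<bar>Pol d x n - Pol d y n\<bar> \<le> real d * \<eta> * 2 ^ (J * d)" by (simp add: power_mult)
    then show "norm (e (Pol d x n) - e (Pol d y n)) \<le> 2 * pi * (real d * \<eta> * 2 ^ (J * d))"
    proof -
      have "2 * pi * \<bar>Pol d x n - Pol d y n\<bar> \<le> 2 * pi * (real d * \<eta> * 2 ^ (J * d))"
        by (rule mult_left_mono) (use pd pi_gt_zero in auto)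
      then show ?thesis using e_lip[of "Pol d x n" "Pol d y n"] by linarith
    qed
  qed
  also have "\<dots> = real (2^l) * (2 * pi * (real d * \<eta> * 2 ^ (J * d)))" by simp
  also have "\<dots> \<le> 2^J * (2 * pi * (real d * \<eta> * 2 ^ (J * d)))"
  proof (rule mult_right_mono)
    have "2^l \<le> (a+1) * (2::nat)^l" by simp
    then have "2^l \<le> (2::nat)^J" using al by linarith
    then have "real (2^l) \<le> real ((2::nat)^J)" by (simp only: of_nat_le_iff)
    then show "real (2^l) \<le> 2^J" by simp
    show "0 \<le> 2 * pi * (real d * \<eta> * 2 ^ (J * d))" using eta by simp
  qed
  finally show ?thesis .
qed


definition bad :: "nat \<Rightarrow> nat \<Rightarrow> nat \<Rightarrow> real \<Rightarrow> (nat \<Rightarrow> nat) set" where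
  "bad d Q J \<mu> = {g \<in> grid d Q. \<exists>l\<le>J. \<exists>a. (a+1) * 2^l \<le> (2::nat)^J \<and> \<mu> \<le> norm (Blk d (gpt Q g) l a)}"

lemma finite_bad: "finite (bad d Q J \<mu>)"
  unfolding bad_def using finite_grid by simp

lemma card_bad:
  assumes d: "d \<ge> 1" and mu: "\<mu> > 0" and JQ: "2^J < Q"
  shows "real (card (bad d Q J \<mu>)) \<le> real (J+1) * 2^J * real Q ^ d / \<mu>^2"
proof -
  define S where "S l a = {g\<in>grid d Q. \<mu> \<le> norm (Blk d (gpt Q g) l a)}" for l a
  have sub: "bad d Q J \<mu> \<subseteq> (\<Union>l\<in>{..J}. \<Union>a\<in>{..<2^(J-l)}. S l a)"
  proof
    fix g assume "g \<in> bad d Q J \<mu>"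
    then obtain l a where g: "g \<in> grid d Q" "l \<le> J" "(a+1) * 2^l \<le> (2::nat)^J" "\<mu> \<le> norm (Blk d (gpt Q g) l a)"
      unfolding bad_def by blast
    have "(2::nat)^J = 2^(J-l) * 2^l" using g(2) by (simp add: power_add[symmetric])
    then have "(a + 1) * 2^l \<le> 2^(J-l) * (2::nat)^l" using g(3) by simp
    then have "a + 1 \<le> 2^(J-l)" by (simp only: mult_le_cancel2) simp
    then have "a \<in> {..<2^(J-l)}" "l \<in> {..J}" using g(2) by auto
    then show "g \<in> (\<Union>l\<in>{..J}. \<Union>a\<in>{..<2^(J-l)}. S l a)" using g(1,4) unfolding S_def by blast
  qed
  have cS: "real (card (S l a)) \<le> real Q ^ d * 2^l / \<mu>^2" if "l \<le> J" "a < 2^(J-l)" for l a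
  proof -
    let ?A = "{a * 2^l<..(a+1) * 2^l}"
    have "(a+1) * 2^l \<le> 2^(J-l) * (2::nat)^l" using that by (intro mult_right_mono) auto
    also have "\<dots> = 2^J" using that by (simp add: power_add[symmetric])
    finally have al: "(a+1) * 2^l \<le> (2::nat)^J" .
    have A: "finite ?A" "?A \<subseteq> {..<Q}" using al JQ by auto
    have "real (card (S l a)) \<le> (\<Sum>g\<in>grid d Q. (norm (Blk d (gpt Q g) l a))^2) / \<mu>^2"
      unfolding S_def by (rule cheb[OF finite_grid mu])
    also have "(\<Sum>g\<in>grid d Q. (norm (Blk d (gpt Q g) l a))^2) = real Q ^ d * real (card ?A)"
      unfolding Blk_def by (rule parseval[OF d A])
    also have "card ?A = 2^l" by (simp add: algebra_simps)
    finally show ?thesis by simp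
  qed
  have "card (bad d Q J \<mu>) \<le> card (\<Union>l\<in>{..J}. \<Union>a\<in>{..<2^(J-l)}. S l a)"
    by (rule card_mono[OF _ sub]) (auto simp: S_def finite_grid)
  also have "\<dots> \<le> (\<Sum>l\<in>{..J}. card (\<Union>a\<in>{..<2^(J-l)}. S l a))" by (rule card_UN_le) simp
  also have "\<dots> \<le> (\<Sum>l\<in>{..J}. \<Sum>a\<in>{..<2^(J-l)}. card (S l a))"
    by (intro sum_mono card_UN_le) simp
  finally have "real (card (bad d Q J \<mu>)) \<le> real (\<Sum>l\<in>{..J}. \<Sum>a\<in>{..<2^(J-l)}. card (S l a))"
    by (rule of_nat_mono)
  also have "\<dots> = (\<Sum>l\<in>{..J}. \<Sum>a\<in>{..<2^(J-l)}. real (card (S l a)))" by simp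
  also have "\<dots> \<le> (\<Sum>l\<in>{..J}. \<Sum>a\<in>{..<(2::nat)^(J-l)}. real Q ^ d * 2^l / \<mu>^2)"
    by (intro sum_mono cS) auto
  also have "\<dots> = (\<Sum>l\<in>{..J}. 2^J * real Q ^ d / \<mu>^2)"
  proof (rule sum.cong[OF refl])
    fix l assume l: "l \<in> {..J}"
    have "(2::real)^(J-l) * 2^l = 2^J" using l by (simp add: power_add[symmetric])
    then show "(\<Sum>a\<in>{..<(2::nat)^(J-l)}. real Q ^ d * 2^l / \<mu>^2) = 2^J * real Q ^ d / \<mu>^2"
      by (simp add: field_simps)
  qed
  also have "\<dots> = real (J+1) * 2^J * real Q ^ d / \<mu>^2" by simp
  finally show ?thesis .
qed




lemma diam_le:
  assumes "\<forall>x\<in>C. \<forall>y\<in>C. dd x y \<le> B" "0 \<le> B"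
  shows "diam_wrt dd C \<le> B"
proof (cases "C = {}")
  case True then show ?thesis using assms unfolding diam_wrt_def by simp
next
  case False
  then have ne: "{dd x y | x y. x \<in> C \<and> y \<in> C} \<noteq> {}" by blast
  have "Sup {dd x y | x y. x \<in> C \<and> y \<in> C} \<le> B"
    by (rule cSup_least[OF ne]) (use assms in blast)
  then show ?thesis using False unfolding diam_wrt_def by simp
qed

lemma diam_nonneg:
  assumes "\<forall>x\<in>C. \<forall>y\<in>C. dd x y \<le> B" "\<forall>x. dd x x = 0"
  shows "0 \<le> diam_wrt dd C"
proof (cases "C = {}")
  case True then show ?thesis unfolding diam_wrt_def by simp
next
  case False
  then obtain x where x: "x \<in> C" by auto
  have "dd x x \<le> Sup {dd x y | x y. x \<in> C \<and> y \<in> C}"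
  proof (rule cSup_upper)
    show "dd x x \<in> {dd x y | x y. x \<in> C \<and> y \<in> C}" using x by blast
    show "bdd_above {dd x y | x y. x \<in> C \<and> y \<in> C}"
      unfolding bdd_above_def using assms(1) by blast
  qed
  then show ?thesis using False assms unfolding diam_wrt_def by simp
qed

lemma haus_term_le:
  assumes "\<forall>x\<in>C. \<forall>y\<in>C. dd x y \<le> B" "\<forall>x. dd x x = 0" "0 \<le> B" "s > 0"
  shows "haus_term dd s C \<le> ennreal (B powr s)"
proof -
  have "diam_wrt dd C powr s \<le> B powr s"
    using diam_le[OF assms(1,3)] diam_nonneg[OF assms(1,2)] by (intro powr_mono2) (use assms in auto)
  then show ?thesis unfolding haus_term_def using assms(4) by (auto intro: ennreal_leI)
qed

lemma hm_zero:
  assumes "\<And>\<delta> \<epsilon>. \<delta> > 0 \<Longrightarrow> \<epsilon> > 0 \<Longrightarrow> \<exists>C. A \<subseteq> (\<Union>i. C i) \<and> (\<forall>i. bounded_wrt dd (C i) \<and> diam_wrt dd (C i) \<le> \<delta>)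
      \<and> (\<Sum>i. haus_term dd s (C i)) \<le> ennreal \<epsilon>"
  shows "hausdorff_measure dd s A = 0"
proof -
  have "hausdorff_pre dd s \<delta> A = 0" if d: "\<delta> > 0" for \<delta>
  proof -
    have "hausdorff_pre dd s \<delta> A \<le> 0"
    proof (rule ennreal_le_epsilon)
      fix \<epsilon> :: real assume "0 < \<epsilon>"
      then obtain C where C: "A \<subseteq> (\<Union>i. C i)" "\<forall>i. bounded_wrt dd (C i) \<and> diam_wrt dd (C i) \<le> \<delta>"
        "(\<Sum>i. haus_term dd s (C i)) \<le> ennreal \<epsilon>" using assms[OF d] by blast
      have "hausdorff_pre dd s \<delta> A \<le> (\<Sum>i. haus_term dd s (C i))"
        unfolding hausdorff_pre_def by (rule INF_lower) (use C in auto)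
      then show "hausdorff_pre dd s \<delta> A \<le> 0 + ennreal \<epsilon>" using C(3) by simp
    qed
    then show ?thesis by simp
  qed
  then show ?thesis unfolding hausdorff_measure_def by simp
qed

lemma sum_if_less: "(\<Sum>i<M. if i < c then w else 0) = real (min M c) * (w::real)"
proof (induction M)
  case 0 then show ?case by simp
next
  case (Suc M)
  then show ?case by (cases "M < c") (auto simp: min_def algebra_simps)
qed

lemma cover_sum:
  fixes H :: "nat \<Rightarrow> nat \<Rightarrow> 'a set" and c :: "nat \<Rightarrow> nat" and w :: "nat \<Rightarrow> real"
  assumes w: "\<And>J. 0 \<le> w J"
    and Hw: "\<And>J i. Lz \<le> J \<Longrightarrow> i < c J \<Longrightarrow> haus_term dd s (H J i) \<le> ennreal (w J)"
    and tot: "\<And>K. (\<Sum>J\<in>{Lz..<K}. real (c J) * w J) \<le> \<epsilon>"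
    and C_def: "\<And>n. C n = (case prod_decode n of (J, i) \<Rightarrow> if Lz \<le> J \<and> i < c J then H J i else {})"
  shows "(\<Sum>n. haus_term dd s (C n)) \<le> ennreal \<epsilon>"
proof -
  define Hr where "Hr p = (case p of (J, i) \<Rightarrow> if Lz \<le> J \<and> i < c J then w J else 0)" for p
  have Hr0: "0 \<le> Hr p" for p unfolding Hr_def using w by (auto split: prod.splits)
  have hC: "haus_term dd s (C n) \<le> ennreal (Hr (prod_decode n))" for n
  proof -
    obtain J i where p: "prod_decode n = (J, i)" by (cases "prod_decode n")
    show ?thesis
    proof (cases "Lz \<le> J \<and> i < c J")
      case True then show ?thesis unfolding C_def Hr_def p using Hw by simp
    next
      case False
      then have "C n = {}" "Hr (prod_decode n) = 0" using False by (auto simp: C_def Hr_def p)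
      then show ?thesis by (simp add: haus_term_def)
    qed
  qed
  have part: "(\<Sum>n<M. haus_term dd s (C n)) \<le> ennreal \<epsilon>" for M
  proof -
    have "(\<Sum>n<M. haus_term dd s (C n)) \<le> (\<Sum>n<M. ennreal (Hr (prod_decode n)))"
      by (intro sum_mono hC)
    also have "\<dots> = ennreal (\<Sum>n<M. Hr (prod_decode n))" using Hr0 by simp
    also have "(\<Sum>n<M. Hr (prod_decode n)) = (\<Sum>p\<in>prod_decode ` {..<M}. Hr p)"
      by (simp add: sum.reindex inj_prod_decode)
    also have "\<dots> \<le> (\<Sum>p\<in>{..<M} \<times> {..<M}. Hr p)"
    proof (rule sum_mono2)
      show "prod_decode ` {..<M} \<subseteq> {..<M} \<times> {..<M}"
      proof
        fix p assume "p \<in> prod_decode ` {..<M}"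
        then obtain n where n: "n < M" "p = prod_decode n" by auto
        obtain a b where p: "p = (a, b)" by (cases p)
        have "prod_encode (a, b) = n" using n p by simp
        then have "a \<le> n" "b \<le> n" using le_prod_encode_1[of a b] le_prod_encode_2[of b a] by auto
        then have "(a, b) \<in> {..<M} \<times> {..<M}" using n(1) by auto
        then show "p \<in> {..<M} \<times> {..<M}" using p by simp
      qed
    qed (use Hr0 in auto)
    also have "\<dots> = (\<Sum>J<M. \<Sum>i<M. Hr (J, i))" by (simp add: sum.cartesian_product)
    also have "\<dots> \<le> (\<Sum>J\<in>{..<M}. if Lz \<le> J then real (c J) * w J else 0)"
    proof (rule sum_mono)
      fix J assume "J \<in> {..<M}"
      show "(\<Sum>i<M. Hr (J, i)) \<le> (if Lz \<le> J then real (c J) * w J else 0)"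
      proof (cases "Lz \<le> J")
        case False then show ?thesis unfolding Hr_def by simp
      next
        case True
        have "(\<Sum>i<M. Hr (J, i)) = (\<Sum>i<M. if i < c J then w J else 0)"
          by (rule sum.cong[OF refl]) (simp add: Hr_def True)
        also have "\<dots> = real (min M (c J)) * w J" by (rule sum_if_less)
        also have "\<dots> \<le> real (c J) * w J" using w[of J] by (intro mult_right_mono) auto
        finally show ?thesis using True by simp
      qed
    qed
    also have "\<dots> = (\<Sum>J\<in>{J\<in>{..<M}. Lz \<le> J}. real (c J) * w J)"
      by (simp only: sum.inter_filter[OF finite_lessThan])
    also have "\<dots> = (\<Sum>J\<in>{Lz..<M}. real (c J) * w J)" by (rule sum.cong) auto
    also have "\<dots> \<le> \<epsilon>" by (rule tot)
    finally show ?thesis by (simp add: ennreal_leI)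
  qed
  show ?thesis by (rule suminf_le_const[OF summableI part])
qed


definition cell :: "nat \<Rightarrow> nat \<Rightarrow> (nat \<Rightarrow> nat) \<Rightarrow> (nat \<Rightarrow> real) set" where
  "cell d Q g = {y. \<forall>k\<in>{1..d}. \<bar>y k - real (g k) / real Q\<bar> \<le> 1 / real Q}"

lemma cell_dist:
  assumes "y \<in> cell d Q g" "z \<in> cell d Q g" "Q > 0"
  shows "euc_dist d y z \<le> 2 * sqrt (real d) / real Q"
proof -
  have "(\<Sum>i=1..d. (y i - z i)^2) \<le> (\<Sum>i=1..d. (2 / real Q)^2)"
  proof (rule sum_mono)
    fix i assume i: "i \<in> {1..d}"
    have h1: "\<bar>y i - real (g i) / real Q\<bar> \<le> 1 / real Q" using assms(1) i unfolding cell_def by blast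
    have h2: "\<bar>z i - real (g i) / real Q\<bar> \<le> 1 / real Q" using assms(2) i unfolding cell_def by blast
    have h3: "2 / real Q = 1 / real Q + 1 / real Q" by simp
    have "\<bar>y i - z i\<bar> \<le> 2 / real Q"
      using h1 h2 h3 unfolding abs_le_iff by linarith
    then show "(y i - z i)^2 \<le> (2 / real Q)^2"
      by (metis abs_ge_zero power2_abs power_mono)
  qed
  also have "\<dots> = (2 * sqrt (real d) / real Q)^2" by (simp add: power_divide power_mult_distrib)
  finally show ?thesis unfolding euc_dist_def using assms(3)
    by (metis real_sqrt_le_iff real_sqrt_abs abs_of_nonneg divide_nonneg_nonneg mult_nonneg_nonneg
         of_nat_0_le_iff real_sqrt_ge_zero zero_le_numeral)
qed

lemma euc_dist_self: "euc_dist d x x = 0"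
  unfolding euc_dist_def by simp

lemma geo_tail:
  fixes r :: real
  assumes "0 \<le> r" "r < 1"
  shows "(\<Sum>J\<in>{J0..<K}. r^J) \<le> r^J0 / (1 - r)"
proof (cases "J0 < K")
  case True
  have "(1 - r) * (\<Sum>J\<in>{J0..K-1}. r^J) = r^J0 - r^Suc (K-1)"
    by (rule sum_gp_multiplied) (use True in auto)
  moreover have "{J0..<K} = {J0..K-1}" using True by auto
  ultimately have "(1 - r) * (\<Sum>J\<in>{J0..<K}. r^J) \<le> r^J0" using assms by simp
  then show ?thesis using assms by (simp add: field_simps)
next
  case False
  then show ?thesis using assms by simp
qed


lemma cost_alg:
  fixes d J :: nat and \<alpha> \<beta> s :: real
  assumes \<beta>: "\<beta> = (2*\<alpha> - 1)/2" and s: "s = real d - \<beta>/(real d + 2)"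
  shows "real (J+1) * 2^J * real (2^((d+2)*J)) ^ d / (2 powr ((real J - 1)*\<alpha>) / (2*(real J + 1)))^2
           * (2 * sqrt (real d) / real (2^((d+2)*J))) powr s
       = 4 * (2 * sqrt (real d)) powr s * 2 powr (2*\<alpha>) * (real J + 1)^3 * 2 powr (-\<beta> * real J)"
proof -
  define q where "q = (real d + 2) * real J"
  define A where "A = (2 * sqrt (real d)) powr s"
  have Q: "real (2^((d+2)*J)) = 2 powr q"
  proof -
    have "2 powr (real ((d+2)*J)) = (2::real)^((d+2)*J)" by (rule powr_realpow) simp
    moreover have "real ((d+2)*J) = (real d + 2) * real J" by (simp add: algebra_simps)
    ultimately show ?thesis unfolding q_def by simp
  qed
  have Qd: "(2 powr q) ^ d = 2 powr (q * real d)" by (simp add: powr_power mult_ac)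
  have Qs: "(2 * sqrt (real d) / 2 powr q) powr s = A / 2 powr (q * s)"
    unfolding A_def by (simp add: powr_divide powr_powr)
  have mu2: "(2 powr ((real J - 1)*\<alpha>) / (2*(real J + 1)))^2 = 2 powr (2*((real J - 1)*\<alpha>)) / (4*(real J + 1)^2)"
  proof -
    have "(2 powr ((real J - 1)*\<alpha>))^2 = (2::real) powr (2*((real J - 1)*\<alpha>))"
      using powr_power[of "2::real" "(real J - 1)*\<alpha>" 2] by simp
    moreover have "(2*(real J + 1))^2 = 4*(real J + 1)^2" by (simp add: power2_eq_square algebra_simps)
    ultimately show ?thesis by (simp only: power_divide)
  qed
  have tJ: "(2::real)^J = 2 powr (real J)" by (simp add: powr_realpow)
  have "real (J+1) * 2^J * real (2^((d+2)*J)) ^ d / (2 powr ((real J - 1)*\<alpha>) / (2*(real J + 1)))^2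
           * (2 * sqrt (real d) / real (2^((d+2)*J))) powr s
      = real (J+1) * 2 powr (real J) * 2 powr (q * real d) / (2 powr (2*((real J - 1)*\<alpha>)) / (4*(real J + 1)^2))
           * (A / 2 powr (q * s))"
    unfolding Q Qd Qs mu2 tJ ..
  also have "\<dots> = 4 * A * (real J + 1)^3 * (2 powr (real J) * 2 powr (q * real d) / (2 powr (2*((real J - 1)*\<alpha>)) * 2 powr (q * s)))"
    by (simp add: field_simps power2_eq_square power3_eq_cube)
  also have "2 powr (real J) * 2 powr (q * real d) / (2 powr (2*((real J - 1)*\<alpha>)) * 2 powr (q * s))
      = 2 powr (real J + q * real d - (2*((real J - 1)*\<alpha>) + q * s))"
    by (simp add: powr_add powr_diff)
  also have "real J + q * real d - (2*((real J - 1)*\<alpha>) + q * s) = 2 * \<alpha> + (- \<beta> * real J)"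
  proof -
    have "q * real d - q * s = \<beta> * real J" unfolding q_def s by (simp add: field_simps)
    moreover have "\<beta> * real J = \<alpha> * real J - real J / 2" unfolding \<beta> by (simp add: field_simps)
    moreover have "real J + q * real d - (2*((real J - 1)*\<alpha>) + q * s)
        = real J + (q * real d - q * s) - 2*(\<alpha> * real J) + 2*\<alpha>" by (simp add: algebra_simps)
    moreover have "- \<beta> * real J = - (\<beta> * real J)" by simp
    ultimately show ?thesis by linarith
  qed
  also have "2 powr (2 * \<alpha> + (- \<beta> * real J)) = 2 powr (2*\<alpha>) * 2 powr (-\<beta> * real J)"
    by (rule powr_add)
  finally show ?thesis unfolding A_def by (simp add: mult_ac)
qed


lemma ev1: "eventually (\<lambda>J::nat. 4*pi*c*(real J+1) \<le> 2^J) at_top"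
  by real_asymp

lemma ev2: "(\<beta>::real) > 0 \<Longrightarrow> eventually (\<lambda>J::nat. C*(real J+1)^3 \<le> 2 powr (\<beta>*real J/2)) at_top"
  by real_asymp

lemma ev3: "(\<delta>::real) > 0 \<Longrightarrow> eventually (\<lambda>J::nat. c / 2^J \<le> \<delta>) at_top"
  by real_asymp

lemma main_cover:
  fixes d :: nat and \<alpha> \<delta> \<epsilon> :: real
  assumes d: "d \<ge> 1" and \<alpha>: "1/2 < \<alpha>" "\<alpha> < 1" and \<delta>: "\<delta> > 0" and \<epsilon>: "\<epsilon> > 0"
    and \<beta>_def: "\<beta> = (2*\<alpha> - 1)/2" and s_def: "s = real d - \<beta>/(real d + 2)"
  shows "\<exists>C. E_set d \<alpha> \<subseteq> (\<Union>i. C i) \<and> (\<forall>i. bounded_wrt (euc_dist d) (C i) \<and> diam_wrt (euc_dist d) (C i) \<le> \<delta>)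
      \<and> (\<Sum>i. haus_term (euc_dist d) s (C i)) \<le> ennreal \<epsilon>"
proof -
  have \<beta>0: "\<beta> > 0" using \<alpha> unfolding \<beta>_def by simp
  have s0: "s > 0"
  proof -
    have "\<beta> < 1/2" using \<alpha> unfolding \<beta>_def by simp
    moreover have "\<beta>/(real d + 2) \<le> \<beta>" using \<beta>0 by (simp add: divide_le_eq)
    ultimately show ?thesis unfolding s_def using d by linarith
  qed
  define Q where "Q J = (2::nat)^((d+2)*J)" for J
  define \<mu> where "\<mu> J = 2 powr ((real J - 1)*\<alpha>) / (2*(real J + 1))" for J
  define B where "B J = bad d (Q J) J (\<mu> J)" for J
  define c where "c J = card (B J)" for J
  define en where "en J = (SOME h. bij_betw h {0..<c J} (B J))" for J
  have en: "bij_betw (en J) {0..<c J} (B J)" for J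
  proof -
    obtain h where "bij_betw h {0..<card (B J)} (B J)"
      using ex_bij_betw_nat_finite[OF finite_bad[of d "Q J" J "\<mu> J"]] unfolding B_def by blast
    then show ?thesis unfolding en_def c_def by (rule someI[where P="\<lambda>h. bij_betw h {0..<card (B J)} (B J)"])
  qed
  define H where "H J i = cell d (Q J) (en J i)" for J i
  define w where "w J = (2 * sqrt (real d) / real (Q J)) powr s" for J
  define r where "r = (2::real) powr (-\<beta>/2)"
  define Kc where "Kc = 4 * (2 * sqrt (real d)) powr s * 2 powr (2*\<alpha>)"
  have r0: "0 \<le> r" "r < 1" unfolding r_def using \<beta>0 by (auto intro: powr_less_one)
  have Qpos: "0 < Q J" for J unfolding Q_def by simp
  have QJ: "real (Q J) = 2^J * 2^(J*d) * 2^J" for J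
    unfolding Q_def by (simp add: power_add[symmetric] algebra_simps)
  have QgeJ: "(2::real)^J \<le> real (Q J)" for J
  proof -
    have "(2::real)^J \<le> 2^((d+2)*J)" by (rule power_increasing) auto
    then show ?thesis unfolding Q_def by simp
  qed
  have ev4: "eventually (\<lambda>J. r^J < \<epsilon> * (1 - r)) at_top"
    by (rule order_tendstoD(2)[OF LIMSEQ_power_zero]) (use r0 \<epsilon> in auto)
  have "eventually (\<lambda>J::nat. 1 \<le> J \<and> 4*pi*real d*(real J+1) \<le> 2^J \<and> Kc*(real J+1)^3 \<le> 2 powr (\<beta>*real J/2)
      \<and> 2* sqrt (real d)/2^J \<le> \<delta> \<and> r^J < \<epsilon> * (1 - r)) at_top"
    using eventually_ge_at_top[of "1::nat"] ev1[of "real d"] ev2[OF \<beta>0, of Kc] ev3[OF \<delta>, of "2* sqrt (real d)"] ev4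
    by eventually_elim auto
  then obtain J0 where J0: "\<And>J. J \<ge> J0 \<Longrightarrow> 1 \<le> J \<and> 4*pi*real d*(real J+1) \<le> 2^J \<and> Kc*(real J+1)^3 \<le> 2 powr (\<beta>*real J/2)
      \<and> 2* sqrt (real d)/2^J \<le> \<delta> \<and> r^J < \<epsilon> * (1 - r)"
    unfolding eventually_at_top_linorder by blast
  define C where "C n = (case prod_decode n of (J, i) \<Rightarrow> if J0 \<le> J \<and> i < c J then H J i else {})" for n

  have Hdist: "\<forall>y\<in>H J i. \<forall>z\<in>H J i. euc_dist d y z \<le> 2 * sqrt (real d) / real (Q J)" for J i
    unfolding H_def using cell_dist Qpos by blast
  have Bnn: "0 \<le> 2 * sqrt (real d) / real (Q J)" for J by simp
  have Hdelta: "2 * sqrt (real d) / real (Q J) \<le> \<delta>" if "J0 \<le> J" for J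
  proof -
    have "2 * sqrt (real d) / real (Q J) \<le> 2 * sqrt (real d) / 2^J"
      using QgeJ[of J] Qpos[of J] by (intro divide_left_mono) auto
    then show ?thesis using J0[OF that] by linarith
  qed

  have cov: "E_set d \<alpha> \<subseteq> (\<Union>i. C i)"
  proof
    fix x assume xE: "x \<in> E_set d \<alpha>"
    then have xT: "x \<in> torus d" and inf: "infinite {N::nat. N \<ge> 1 \<and> norm (weyl_sum d x N) \<ge> real N powr \<alpha>}"
      unfolding E_set_def by auto
    obtain N where N: "N \<ge> 2^J0" "N \<ge> 1" "real N powr \<alpha> \<le> norm (weyl_sum d x N)"
      using inf unfolding infinite_nat_iff_unbounded_le by blast
    define J where "J = (LEAST J. N \<le> 2^J)"
    have exJ: "\<exists>J. N \<le> 2^J" using less_exp[of N] by (intro exI[of _ N]) simp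
    have NJ: "N \<le> 2^J" unfolding J_def by (rule LeastI_ex[OF exJ])
    have JJ0: "J0 \<le> J"
    proof (rule ccontr)
      assume "\<not> J0 \<le> J"
      then have "(2::nat)^J < 2^J0" by simp
      then show False using NJ N(1) by linarith
    qed
    have J0J: "1 \<le> J \<and> 4*pi*real d*(real J+1) \<le> 2^J" using J0[OF JJ0] by blast
    then have J1: "1 \<le> J" by simp
    have Nlow: "2^(J-1) < N"
    proof -
      have "J - 1 < J" using J1 by simp
      then have "\<not> N \<le> 2^(J-1)" unfolding J_def using not_less_Least J_def by blast
      then show ?thesis by simp
    qed
    obtain l a where la: "l \<le> J" "(a+1) * 2^l \<le> (2::nat)^J"
        and Sx: "norm (weyl_sum d x N) \<le> real (J+1) * norm (Blk d x l a)"
      using dyadic[OF NJ, of d x] by blast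
    have low: "2 powr ((real J - 1)*\<alpha>) \<le> real N powr \<alpha>"
    proof -
      have "2 powr ((real J - 1)*\<alpha>) = (2 powr (real (J - 1))) powr \<alpha>"
        using J1 by (simp add: powr_powr of_nat_diff)
      also have "\<dots> = real (2^(J-1)) powr \<alpha>" by (simp add: powr_realpow)
      also have "\<dots> \<le> real N powr \<alpha>" using Nlow \<alpha> by (intro powr_mono2) auto
      finally show ?thesis .
    qed
    have mu2: "2 * \<mu> J \<le> norm (Blk d x l a)"
    proof -
      have A: "2 powr ((real J - 1)*\<alpha>) \<le> real (J+1) * norm (Blk d x l a)" using low N(3) Sx by linarith
      have Jp': "0 < real (J+1)" by simp
      have A': "2 powr ((real J - 1)*\<alpha>) \<le> norm (Blk d x l a) * real (J+1)" using A by (simp only: mult.commute)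
      then have A2: "2 powr ((real J - 1)*\<alpha>) / real (J+1) \<le> norm (Blk d x l a)" by (simp only: pos_divide_le_eq[OF Jp'])
      have nz: "2 * real J + 2 \<noteq> 0" "1 + real J \<noteq> 0" "real J + 1 \<noteq> 0" by linarith+
      have "2 * \<mu> J = 2 powr ((real J - 1)*\<alpha>) / real (J+1)" unfolding \<mu>_def using nz by (simp add: field_simps)
      then show ?thesis using A2 by simp
    qed
    define q where "q = real (Q J)"
    have q0: "q > 0" unfolding q_def using Qpos by simp
    define g where "g = restrict (\<lambda>k. nat \<lfloor>q * x k\<rfloor>) {1..d}"
    have xk: "0 \<le> x k \<and> x k < 1" if "k \<in> {1..d}" for k using xT that unfolding torus_def by auto
    have gk: "real (g k) = of_int \<lfloor>q * x k\<rfloor>" if k: "k \<in> {1..d}" for k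
    proof -
      have "0 \<le> q * x k" using xk[OF k] q0 by simp
      then show ?thesis unfolding g_def using k by simp
    qed
    have gG: "g \<in> grid d (Q J)"
      unfolding grid_def g_def restrict_PiE_iff
    proof
      fix k assume k: "k \<in> {1..d}"
      have "q * x k < q" using xk[OF k] q0 by simp
      then have "\<lfloor>q * x k\<rfloor> < int (Q J)" unfolding q_def by (simp add: floor_less_iff)
      moreover have "0 \<le> q * x k" using xk[OF k] q0 by simp
      then have "0 \<le> \<lfloor>q * x k\<rfloor>" by simp
      ultimately show "nat \<lfloor>q * x k\<rfloor> \<in> {..<Q J}" by (simp add: nat_less_iff)
    qed
    have xy: "\<forall>k\<in>{1..d}. \<bar>x k - gpt (Q J) g k\<bar> \<le> 1 / q"
    proof
      fix k assume k: "k \<in> {1..d}"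
      have f1: "of_int \<lfloor>q * x k\<rfloor> \<le> q * x k" by (rule of_int_floor_le)
      have f2: "q * x k < of_int \<lfloor>q * x k\<rfloor> + 1" by (rule real_of_int_floor_add_one_gt)
      have "gpt (Q J) g k = of_int \<lfloor>q * x k\<rfloor> / q" unfolding gpt_def gk[OF k] q_def ..
      moreover have "\<bar>x k - of_int \<lfloor>q * x k\<rfloor> / q\<bar> \<le> 1 / q"
      proof -
        have eq: "x k - of_int \<lfloor>q * x k\<rfloor> / q = (q * x k - of_int \<lfloor>q * x k\<rfloor>) / q"
          using q0 by (simp add: field_simps)
        have "0 \<le> x k - of_int \<lfloor>q * x k\<rfloor> / q" unfolding eq using f1 q0 by simp
        moreover have "x k - of_int \<lfloor>q * x k\<rfloor> / q \<le> 1 / q" unfolding eq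
        proof -
          have "q * x k - of_int \<lfloor>q * x k\<rfloor> \<le> 1" using f2 by linarith
          then show "(q * x k - of_int \<lfloor>q * x k\<rfloor>) / q \<le> 1 / q" using q0 by (intro divide_right_mono) auto
        qed
        ultimately show ?thesis by simp
      qed
      ultimately show "\<bar>x k - gpt (Q J) g k\<bar> \<le> 1 / q" by simp
    qed
    have lip: "norm (Blk d x l a - Blk d (gpt (Q J) g) l a) \<le> 2^J * (2 * pi * (real d * (1/q) * 2 ^ (J * d)))"
      by (rule blk_lip[OF xy la(2)]) (use q0 in simp)
    have lipeq: "2^J * (2 * pi * (real d * (1/q) * 2 ^ (J * d))) = 2 * pi * real d / 2^J"
      unfolding q_def QJ by (simp add: field_simps)
    have errle: "2 * pi * real d / 2^J \<le> \<mu> J"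
    proof -
      have "2 * pi * real d / 2^J \<le> 1 / (2 * (real J + 1))"
        using J0J by (simp add: field_simps)
      also have "\<dots> \<le> \<mu> J" unfolding \<mu>_def
        using ge_one_powr_ge_zero[of 2 "(real J - 1)*\<alpha>"] J1 \<alpha>
        by (intro divide_right_mono) auto
      finally show ?thesis .
    qed
    have "\<mu> J \<le> norm (Blk d (gpt (Q J) g) l a)"
    proof -
      have "norm (Blk d x l a) \<le> norm (Blk d (gpt (Q J) g) l a) + norm (Blk d x l a - Blk d (gpt (Q J) g) l a)"
        by (metis norm_triangle_sub)
      then show ?thesis using mu2 lip lipeq errle by linarith
    qed
    then have gB: "g \<in> B J" unfolding B_def bad_def using gG la by blast
    then obtain i where i: "i \<in> {0..<c J}" "en J i = g"
      using bij_betw_imp_surj_on[OF en[of J]] by (metis imageE)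
    have "x \<in> H J i" unfolding H_def i(2) cell_def
      using xy unfolding gpt_def q_def by simp
    moreover have "C (prod_encode (J, i)) = H J i" unfolding C_def using JJ0 i(1) by simp
    ultimately show "x \<in> (\<Union>i. C i)" by (metis UN_I UNIV_I)
  qed

  have bd: "\<forall>n. bounded_wrt (euc_dist d) (C n) \<and> diam_wrt (euc_dist d) (C n) \<le> \<delta>"
  proof
    fix n
    obtain J i where p: "prod_decode n = (J, i)" by (cases "prod_decode n")
    show "bounded_wrt (euc_dist d) (C n) \<and> diam_wrt (euc_dist d) (C n) \<le> \<delta>"
    proof (cases "J0 \<le> J \<and> i < c J")
      case True
      then have Cn: "C n = H J i" unfolding C_def p by simp
      show ?thesis unfolding Cn bounded_wrt_def
        using Hdist[of J i] diam_le[OF Hdist[of J i] Bnn[of J]] Hdelta[of J] True by auto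
    next
      case False
      then have Cn: "C n = {}" unfolding C_def p by auto
      show ?thesis unfolding Cn bounded_wrt_def diam_wrt_def using \<delta> by simp
    qed
  qed

  have cost: "real (c J) * w J \<le> r^J" if J: "J0 \<le> J" for J
  proof -
    have J1: "1 \<le> J" using J0[OF J] by blast
    have mupos: "\<mu> J > 0" unfolding \<mu>_def by simp
    have JQ: "2^J < Q J"
    proof -
      have "J < (d+2)*J" using J1 by simp
      then show ?thesis unfolding Q_def by (simp add: power_strict_increasing)
    qed
    have w0: "0 \<le> w J" unfolding w_def by simp
    have "real (c J) * w J \<le> real (J+1) * 2^J * real (Q J) ^ d / (\<mu> J)^2 * w J"
      unfolding c_def B_def by (rule mult_right_mono[OF card_bad[OF d mupos JQ] w0])
    also have "\<dots> = Kc * (real J + 1)^3 * 2 powr (-\<beta> * real J)"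
      unfolding Kc_def w_def Q_def \<mu>_def using cost_alg[OF \<beta>_def s_def, of J] by simp
    also have "\<dots> \<le> 2 powr (\<beta>*real J/2) * 2 powr (-\<beta> * real J)"
      using J0[OF J] by (intro mult_right_mono) auto
    also have "\<dots> = r^J"
    proof -
      have "2 powr (\<beta>*real J/2) * 2 powr (-\<beta> * real J) = (2::real) powr (real J * (-\<beta>/2))"
        by (simp add: powr_add[symmetric] algebra_simps)
      also have "\<dots> = r^J" unfolding r_def by (simp add: powr_power)
      finally show ?thesis .
    qed
    finally show ?thesis .
  qed

  have tot: "(\<Sum>J\<in>{J0..<K}. real (c J) * w J) \<le> \<epsilon>" for K
  proof -
    have "(\<Sum>J\<in>{J0..<K}. real (c J) * w J) \<le> (\<Sum>J\<in>{J0..<K}. r^J)"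
      by (rule sum_mono) (use cost in auto)
    also have "\<dots> \<le> r^J0 / (1 - r)" by (rule geo_tail[OF r0])
    also have "\<dots> \<le> \<epsilon>" using J0[of J0] r0 by (simp add: divide_le_eq)
    finally show ?thesis .
  qed

  have Hw: "haus_term (euc_dist d) s (H J i) \<le> ennreal (w J)" if "J0 \<le> J" "i < c J" for J i
    unfolding w_def by (rule haus_term_le[OF Hdist[of J i] _ Bnn s0]) (simp add: euc_dist_self)

  have sum: "(\<Sum>n. haus_term (euc_dist d) s (C n)) \<le> ennreal \<epsilon>"
    by (rule cover_sum[where H = H and c = c and w = w and Lz = J0])
       (use Hw tot C_def in \<open>auto simp: w_def\<close>)

  show ?thesis using cov bd sum by blast
qed


theorem corollary1p2:
  fixes d :: nat and \<alpha> :: real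
  assumes "d \<ge> 2" and "1/2 < \<alpha>" and "\<alpha> < 1"
  shows "hausdorff_dim (euc_dist d) (E_set d \<alpha>) < ereal (real d)"
proof -
  define \<beta> where "\<beta> = (2*\<alpha> - 1)/2"
  define s where "s = real d - \<beta>/(real d + 2)"
  have d1: "d \<ge> 1" using assms by simp
  have \<beta>0: "\<beta> > 0" using assms(2) unfolding \<beta>_def by simp
  have s0: "0 \<le> s"
  proof -
    have "\<beta> < 1/2" using assms(3) unfolding \<beta>_def by simp
    moreover have "\<beta>/(real d + 2) \<le> \<beta>" using \<beta>0 by (simp add: divide_le_eq)
    ultimately show ?thesis unfolding s_def using d1 by linarith
  qed
  have sd: "s < real d" unfolding s_def using \<beta>0 by simp
  have HM: "hausdorff_measure (euc_dist d) s (E_set d \<alpha>) = 0"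
  proof (rule hm_zero)
    fix \<delta> \<epsilon> :: real
    assume "\<delta> > 0" "\<epsilon> > 0"
    then show "\<exists>C. E_set d \<alpha> \<subseteq> (\<Union>i. C i) \<and> (\<forall>i. bounded_wrt (euc_dist d) (C i) \<and> diam_wrt (euc_dist d) (C i) \<le> \<delta>)
      \<and> (\<Sum>i. haus_term (euc_dist d) s (C i)) \<le> ennreal \<epsilon>"
      by (rule main_cover[OF d1 assms(2,3) _ _ \<beta>_def s_def])
  qed
  have "hausdorff_dim (euc_dist d) (E_set d \<alpha>) \<le> ereal s"
    unfolding hausdorff_dim_def by (rule Inf_lower) (use HM s0 in auto)
  also have "ereal s < ereal (real d)" using sd by simp
  finally show ?thesis .
qed

end
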